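(* For all $n,k\in\mathbb Z$, the sum of the weights of all hybrid lattice paths from $(0,0)$ to $(k,n-k)$ equals $\binom{n}{k}_w$.
   Context: Let $(w(s,t))_{s,t\in\mathbb Z}$ be commuting invertible variables, $W(s,t)=\prod_{j=1}^t w(s,j)$, with the product convention $\prod_{j=l}^m A_j=A_l\cdots A_m$ if $m>l-1$, $=1$ if $m=l-1$, $=A_{l-1}^{-1}\cdots A_{m+1}^{-1}$ if $m<l-1$. The coefficients $\binom{n}{k}_w$ ($n,k\in\mathbb Z$) are the unique family with $\binom{n}{0}_w=\binom{n}{n}_w=1$ for all $n$ and $\binom{n+1}{k}_w=\binom{n}{k}_w+\binom{n}{k-1}_w W(k,n+1-k)$ whenever $(n+1,k)\ne(0,0)$. Hybrid lattice paths from $(0,0)$ to $(N,M)\in\mathbb Z^2$: (i) if $N,M\ge0$, sequences of unit north steps and east steps; (ii) if $N\ge 0>M$, sequences of moves each of which is either a single south step or an east–south combination (an east step immediately followed by a south step), the first move being a south step; (iii) if $N<0\le M$, sequences of moves each of which is either a single west step or a north–west combination (a north step immediately followed by a west step), the first move being a west step; (iv) if $N,M<0$, there are no paths. Weights: each single north or south step has weight $1$; an east step $(s-1,t)\to(s,t)$ has weight $W(s,t)$; a west step $(s,t)\to(s-1,t)$ has weight $W(s,t)^{-1}$; an east–south combination $(s-1,t)\to(s,t)\to(s,t-1)$ has weight $-W(s,t)$; a north–west combination $(s,t-1)\to(s,t)\to(s-1,t)$ has weight $-W(s,t)^{-1}$. The weight of a path is the product of the weights of its steps/moves (the empty path to $(0,0)$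 has weight $1$). *)

theory Defs
  imports Main
begin

definition WW :: "(int \<Rightarrow> int \<Rightarrow> 'a::field) \<Rightarrow> int \<Rightarrow> int \<Rightarrow> 'a" where
  "WW w s t = (if t \<ge> 0 then (\<Prod>j\<in>{1..t}. w s j) else (\<Prod>j\<in>{t+1..0}. inverse (w s j)))"

definition is_wbinom :: "(int \<Rightarrow> int \<Rightarrow> 'a::field) \<Rightarrow> (int \<Rightarrow> int \<Rightarrow> 'a) \<Rightarrow> bool" where
  "is_wbinom w B \<longleftrightarrow>
     (\<forall>n. B n 0 = 1) \<and> (\<forall>n. B n n = 1) \<and>
     (\<forall>n k. (n + 1, k) \<noteq> (0, 0) \<longrightarrow> B (n + 1) k = B n k + B n (k - 1) * WW w k (n + 1 - k))"

definition wbinom :: "(int \<Rightarrow> int \<Rightarrow> 'a::field) \<Rightarrow> int \<Rightarrow> int \<Rightarrow> 'a" where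
  "wbinom w = (THE B. is_wbinom w B)"

datatype move = Nst | Est | Sst | Wst | ESst | NWst

fun move_disp :: "move \<Rightarrow> int \<times> int" where
  "move_disp Nst = (0, 1)"
| "move_disp Est = (1, 0)"
| "move_disp Sst = (0, -1)"
| "move_disp Wst = (-1, 0)"
| "move_disp ESst = (1, -1)"
| "move_disp NWst = (-1, 1)"

definition apply_move :: "int \<times> int \<Rightarrow> move \<Rightarrow> int \<times> int" where
  "apply_move p m = (fst p + fst (move_disp m), snd p + snd (move_disp m))"

fun move_weight :: "(int \<Rightarrow> int \<Rightarrow> 'a::field) \<Rightarrow> int \<times> int \<Rightarrow> move \<Rightarrow> 'a" where
  "move_weight w (x, y) Nst = 1"
| "move_weight w (x, y) Est = WW w (x + 1) y"
| "move_weight w (x, y) Sst = 1"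
| "move_weight w (x, y) Wst = inverse (WW w x y)"
| "move_weight w (x, y) ESst = - WW w (x + 1) y"
| "move_weight w (x, y) NWst = - inverse (WW w x (y + 1))"

fun end_point :: "int \<times> int \<Rightarrow> move list \<Rightarrow> int \<times> int" where
  "end_point p [] = p"
| "end_point p (m # ms) = end_point (apply_move p m) ms"

fun path_weight_from :: "(int \<Rightarrow> int \<Rightarrow> 'a::field) \<Rightarrow> int \<times> int \<Rightarrow> move list \<Rightarrow> 'a" where
  "path_weight_from w p [] = 1"
| "path_weight_from w p (m # ms) = move_weight w p m * path_weight_from w (apply_move p m) ms"

definition path_weight :: "(int \<Rightarrow> int \<Rightarrow> 'a::field) \<Rightarrow> move list \<Rightarrow> 'a" where
  "path_weight w ms = path_weight_from w (0, 0) ms"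

definition hybrid_paths :: "int \<Rightarrow> int \<Rightarrow> move list set" where
  "hybrid_paths N M =
    (if N \<ge> 0 \<and> M \<ge> 0 then {ms. set ms \<subseteq> {Nst, Est} \<and> end_point (0, 0) ms = (N, M)}
     else if N \<ge> 0 \<and> M < 0 then
       {ms. set ms \<subseteq> {Sst, ESst} \<and> ms \<noteq> [] \<and> hd ms = Sst \<and> end_point (0, 0) ms = (N, M)}
     else if N < 0 \<and> M \<ge> 0 then
       {ms. set ms \<subseteq> {Wst, NWst} \<and> ms \<noteq> [] \<and> hd ms = Wst \<and> end_point (0, 0) ms = (N, M)}
     else {})"

end

theory Submission
  imports Defs
begin


definition Paths :: "move set \<Rightarrow> int \<times> int \<Rightarrow> int \<times> int \<Rightarrow> move list set" where
  "Paths A p q = {ms. set ms \<subseteq> A \<and> end_point p ms = q}"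

definition unmove :: "int \<times> int \<Rightarrow> move \<Rightarrow> int \<times> int" where
  "unmove q m = (fst q - fst (move_disp m), snd q - snd (move_disp m))"

definition GG :: "(int \<Rightarrow> int \<Rightarrow> 'a::field) \<Rightarrow> move set \<Rightarrow> int \<times> int \<Rightarrow> int \<times> int \<Rightarrow> 'a" where
  "GG w A p q = (\<Sum>ms\<in>Paths A p q. path_weight_from w p ms)"

lemma end_point_append: "end_point p (xs @ ys) = end_point (end_point p xs) ys"
  by (induction xs arbitrary: p) auto

lemma pwf_append:
  "path_weight_from w p (xs @ ys) = path_weight_from w p xs * path_weight_from w (end_point p xs) ys"
  by (induction xs arbitrary: p) (auto simp: mult.assoc)

lemma apply_move_eq: "apply_move r m = q \<longleftrightarrow> r = unmove q m"
  by (cases r; cases q) (auto simp: apply_move_def unmove_def)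

lemma lin_length:
  assumes "\<forall>m\<in>A. ca * fst (move_disp m) + cb * snd (move_disp m) = 1" "set ms \<subseteq> A"
  shows "ca * fst (end_point p ms) + cb * snd (end_point p ms) = ca * fst p + cb * snd p + int (length ms)"
  using assms(2)
proof (induction ms arbitrary: p)
  case Nil then show ?case by simp
next
  case (Cons m ms)
  have "ca * fst (move_disp m) + cb * snd (move_disp m) = 1" using assms(1) Cons.prems by auto
  then show ?case using Cons.IH[of "apply_move p m"] Cons.prems by (simp add: apply_move_def algebra_simps)
qed

lemma lin_mono:
  assumes "\<forall>m\<in>A. ca * fst (move_disp m) + cb * snd (move_disp m) \<ge> 0" "set ms \<subseteq> A"
  shows "ca * fst (end_point p ms) + cb * snd (end_point p ms) \<ge> ca * fst p + cb * snd p"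
  using assms(2)
proof (induction ms arbitrary: p)
  case Nil then show ?case by simp
next
  case (Cons m ms)
  have "ca * fst (move_disp m) + cb * snd (move_disp m) \<ge> 0" using assms(1) Cons.prems by auto
  then show ?case using Cons.IH[of "apply_move p m"] Cons.prems by (simp add: apply_move_def algebra_simps)
qed

lemma Paths_finite:
  assumes "finite A" "\<forall>m\<in>A. ca * fst (move_disp m) + cb * snd (move_disp m) = 1"
  shows "finite (Paths A p q)"
proof -
  let ?L = "nat (ca * fst q + cb * snd q - (ca * fst p + cb * snd p))"
  have "Paths A p q \<subseteq> {ms. set ms \<subseteq> A \<and> length ms = ?L}"
  proof
    fix ms assume "ms \<in> Paths A p q"
    then have "set ms \<subseteq> A" "end_point p ms = q" by (auto simp: Paths_def)
    with lin_length[OF assms(2) this(1), of p] show "ms \<in> {ms. set ms \<subseteq> A \<and> length ms = ?L}"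
      by auto
  qed
  moreover have "finite {ms. set ms \<subseteq> A \<and> length ms = ?L}"
    using finite_lists_length_eq[OF assms(1)] .
  ultimately show ?thesis by (rule finite_subset)
qed

lemma GG_empty:
  assumes "\<forall>m\<in>A. ca * fst (move_disp m) + cb * snd (move_disp m) \<ge> 0"
    and "ca * fst q + cb * snd q < ca * fst p + cb * snd p"
  shows "GG w A p q = 0"
proof -
  have "Paths A p q = {}"
  proof (rule ccontr)
    assume "Paths A p q \<noteq> {}"
    then obtain ms where "set ms \<subseteq> A" "end_point p ms = q" by (auto simp: Paths_def)
    with lin_mono[OF assms(1) this(1), of p] assms(2) show False by auto
  qed
  then show ?thesis by (simp add: GG_def)
qed

lemma Paths_decomp:
  assumes "a \<noteq> b"
  shows "Paths {a,b} p q = (if q = p then {[]} else {}) \<union>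
     ((\<lambda>ms. ms @ [a]) ` Paths {a,b} p (unmove q a) \<union> (\<lambda>ms. ms @ [b]) ` Paths {a,b} p (unmove q b))"
proof (rule set_eqI)
  fix ms
  show "ms \<in> Paths {a,b} p q \<longleftrightarrow> ms \<in> (if q = p then {[]} else {}) \<union>
     ((\<lambda>ms. ms @ [a]) ` Paths {a,b} p (unmove q a) \<union> (\<lambda>ms. ms @ [b]) ` Paths {a,b} p (unmove q b))"
  proof (cases ms rule: rev_cases)
    case Nil then show ?thesis by (auto simp: Paths_def)
  next
    case (snoc ys m) then show ?thesis using assms
      by (auto simp: Paths_def end_point_append apply_move_eq)
  qed
qed

lemma GG_decomp:
  assumes ab: "a \<noteq> b" and fin: "\<And>q. finite (Paths {a,b} p q)"
  shows "GG w {a,b} p q = (if q = p then 1 else 0)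
    + GG w {a,b} p (unmove q a) * move_weight w (unmove q a) a
    + GG w {a,b} p (unmove q b) * move_weight w (unmove q b) b"
proof -
  define X0 :: "move list set" where "X0 = (if q = p then {[]} else {})"
  define Xa where "Xa = (\<lambda>ms. ms @ [a]) ` Paths {a,b} p (unmove q a)"
  define Xb where "Xb = (\<lambda>ms. ms @ [b]) ` Paths {a,b} p (unmove q b)"
  have ia: "inj_on (\<lambda>ms. ms @ [c]) X" for c :: move and X by (auto simp: inj_on_def)
  have sa: "(\<Sum>ms\<in>Xa. path_weight_from w p ms) = GG w {a,b} p (unmove q a) * move_weight w (unmove q a) a"
    unfolding Xa_def GG_def sum.reindex[OF ia] sum_distrib_right
    by (rule sum.cong) (auto simp: Paths_def pwf_append)
  have sb: "(\<Sum>ms\<in>Xb. path_weight_from w p ms) = GG w {a,b} p (unmove q b) * move_weight w (unmove q b) b"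
    unfolding Xb_def GG_def sum.reindex[OF ia] sum_distrib_right
    by (rule sum.cong) (auto simp: Paths_def pwf_append)
  have s0: "(\<Sum>ms\<in>X0. path_weight_from w p ms) = (if q = p then 1 else 0)"
    by (simp add: X0_def)
  have d1: "X0 \<inter> (Xa \<union> Xb) = {}" by (auto simp: X0_def Xa_def Xb_def)
  have d2: "Xa \<inter> Xb = {}" using ab by (auto simp: Xa_def Xb_def)
  have f0: "finite X0" by (simp add: X0_def)
  have fa: "finite Xa" using fin by (simp add: Xa_def)
  have fb: "finite Xb" using fin by (simp add: Xb_def)
  have "GG w {a,b} p q = (\<Sum>ms\<in>X0 \<union> (Xa \<union> Xb). path_weight_from w p ms)"
    unfolding GG_def X0_def Xa_def Xb_def by (subst Paths_decomp[OF ab]) (rule refl)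
  also have "\<dots> = (\<Sum>ms\<in>X0. path_weight_from w p ms) + ((\<Sum>ms\<in>Xa. path_weight_from w p ms) + (\<Sum>ms\<in>Xb. path_weight_from w p ms))"
    using f0 fa fb d1 d2 by (simp add: sum.union_disjoint)
  finally show ?thesis using s0 sa sb by (simp add: add.assoc)
qed



definition T1 :: "(int \<Rightarrow> int \<Rightarrow> 'a::field) \<Rightarrow> int \<Rightarrow> int \<Rightarrow> 'a" where
  "T1 w n k = GG w {Nst, Est} (0, 0) (k, n - k)"
definition T2 :: "(int \<Rightarrow> int \<Rightarrow> 'a::field) \<Rightarrow> int \<Rightarrow> int \<Rightarrow> 'a" where
  "T2 w n k = GG w {Sst, ESst} (0, -1) (k, n - k)"
definition T3 :: "(int \<Rightarrow> int \<Rightarrow> 'a::field) \<Rightarrow> int \<Rightarrow> int \<Rightarrow> 'a" where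
  "T3 w n k = GG w {Wst, NWst} (-1, 0) (k, n - k)"

lemma fin1: "finite (Paths {Nst, Est} p q)"
  by (rule Paths_finite[where ca=1 and cb=1]) auto
lemma fin2: "finite (Paths {Sst, ESst} p q)"
  by (rule Paths_finite[where ca=0 and cb="-1"]) auto
lemma fin3: "finite (Paths {Wst, NWst} p q)"
  by (rule Paths_finite[where ca="-1" and cb=0]) auto

lemma WW0[simp]: "WW w s 0 = 1"
  by (simp add: WW_def)

lemma WW_nz:
  fixes w :: "int \<Rightarrow> int \<Rightarrow> 'a::field"
  assumes "\<forall>s t. w s t \<noteq> 0"
  shows "WW w s t \<noteq> 0"
  using assms by (auto simp: WW_def)

lemma T1_dec:
  "T1 w (n+1) k = (if n + 1 = 0 \<and> k = 0 then 1 else 0) + T1 w n k + T1 w n (k-1) * WW w k (n+1-k)"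
proof -
  have "T1 w (n+1) k = GG w {Nst, Est} (0, 0) (k, n + 1 - k)" by (simp add: T1_def)
  also have "\<dots> = (if (k, n + 1 - k) = (0,0) then 1 else 0)
    + GG w {Nst, Est} (0, 0) (unmove (k, n + 1 - k) Nst) * move_weight w (unmove (k, n + 1 - k) Nst) Nst
    + GG w {Nst, Est} (0, 0) (unmove (k, n + 1 - k) Est) * move_weight w (unmove (k, n + 1 - k) Est) Est"
    by (rule GG_decomp) (auto intro: fin1)
  also have "unmove (k, n + 1 - k) Nst = (k, n - k)" by (simp add: unmove_def)
  also have "unmove (k, n + 1 - k) Est = (k - 1, n - (k - 1))" by (simp add: unmove_def)
  also have "move_weight w (k - 1, n - (k - 1)) Est = WW w k (n+1-k)" by (simp add: algebra_simps)
  also have "((k, n + 1 - k) = (0,0)) = (n + 1 = 0 \<and> k = 0)" by auto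
  finally show ?thesis by (simp add: T1_def)
qed

lemma T2_dec:
  "T2 w (n+1) k = T2 w n k + T2 w n (k-1) * WW w k (n+1-k) - (if n + 1 = 0 \<and> k = 0 then 1 else 0)"
proof -
  have "T2 w n k = GG w {Sst, ESst} (0, -1) (k, n - k)" by (simp add: T2_def)
  also have "\<dots> = (if (k, n - k) = (0,-1) then 1 else 0)
    + GG w {Sst, ESst} (0, -1) (unmove (k, n - k) Sst) * move_weight w (unmove (k, n - k) Sst) Sst
    + GG w {Sst, ESst} (0, -1) (unmove (k, n - k) ESst) * move_weight w (unmove (k, n - k) ESst) ESst"
    by (rule GG_decomp) (auto intro: fin2)
  also have "unmove (k, n - k) Sst = (k, n + 1 - k)" by (simp add: unmove_def)
  also have "unmove (k, n - k) ESst = (k - 1, n - (k - 1))" by (simp add: unmove_def)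
  also have "move_weight w (k - 1, n - (k - 1)) ESst = - WW w k (n+1-k)" by (simp add: algebra_simps)
  also have "((k, n - k) = (0,-1)) = (n + 1 = 0 \<and> k = 0)" by auto
  finally have "T2 w n k = (if n + 1 = 0 \<and> k = 0 then 1 else 0) + T2 w (n+1) k - T2 w n (k-1) * WW w k (n+1-k)"
    by (simp add: T2_def)
  then show ?thesis by (simp add: algebra_simps)
qed

lemma T3_dec:
  fixes w :: "int \<Rightarrow> int \<Rightarrow> 'a::field"
  assumes nz: "\<forall>s t. w s t \<noteq> 0"
  shows "T3 w (n+1) k = T3 w n k + T3 w n (k-1) * WW w k (n+1-k) - (if n + 1 = 0 \<and> k = 0 then 1 else 0)"
proof -
  define X where "X = WW w k (n+1-k)"
  have Xnz: "X \<noteq> 0" unfolding X_def using WW_nz[OF nz] .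
  have "T3 w n (k-1) = GG w {Wst, NWst} (-1, 0) (k - 1, n - (k - 1))" by (simp add: T3_def)
  also have "\<dots> = (if (k - 1, n - (k - 1)) = (-1,0) then 1 else 0)
    + GG w {Wst, NWst} (-1, 0) (unmove (k - 1, n - (k - 1)) Wst) * move_weight w (unmove (k - 1, n - (k - 1)) Wst) Wst
    + GG w {Wst, NWst} (-1, 0) (unmove (k - 1, n - (k - 1)) NWst) * move_weight w (unmove (k - 1, n - (k - 1)) NWst) NWst"
    by (rule GG_decomp) (auto intro: fin3)
  also have "unmove (k - 1, n - (k - 1)) Wst = (k, n + 1 - k)" by (simp add: unmove_def)
  also have "unmove (k - 1, n - (k - 1)) NWst = (k, n - k)" by (simp add: unmove_def)
  also have "move_weight w (k, n + 1 - k) Wst = inverse X" by (simp add: X_def)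
  also have "move_weight w (k, n - k) NWst = - inverse X" by (simp add: X_def algebra_simps)
  also have "((k - 1, n - (k - 1)) = (-1,0)) = (n + 1 = 0 \<and> k = 0)" by auto
  finally have "T3 w n (k-1) = (if n + 1 = 0 \<and> k = 0 then 1 else 0) + T3 w (n+1) k * inverse X - T3 w n k * inverse X"
    by (simp add: T3_def)
  then have "T3 w n (k-1) * X = ((if n + 1 = 0 \<and> k = 0 then 1 else 0) + T3 w (n+1) k * inverse X - T3 w n k * inverse X) * X"
    by simp
  also have "\<dots> = (if n + 1 = 0 \<and> k = 0 then 1 else 0) * X + T3 w (n+1) k * (inverse X * X) - T3 w n k * (inverse X * X)"
    by (simp only: ring_distribs mult.assoc)
  finally have e: "T3 w n (k-1) * X = (if n + 1 = 0 \<and> k = 0 then 1 else 0) * X + T3 w (n+1) k - T3 w n k"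
    using Xnz by simp
  show ?thesis
  proof (cases "n + 1 = 0 \<and> k = 0")
    case True
    then have "X = 1" by (simp add: X_def)
    with e True show ?thesis by (simp add: X_def algebra_simps)
  next
    case False
    with e show ?thesis by (simp add: X_def algebra_simps)
  qed
qed

lemma T1_supp: "k < 0 \<or> n - k < 0 \<Longrightarrow> T1 w n k = 0"
  unfolding T1_def
  by (auto intro: GG_empty[where ca=1 and cb=0] GG_empty[where ca=0 and cb=1])

lemma T2_supp: "k < 0 \<or> n - k \<ge> 0 \<Longrightarrow> T2 w n k = 0"
  unfolding T2_def
  by (auto intro: GG_empty[where ca=1 and cb=0] GG_empty[where ca=0 and cb="-1"])

lemma T3_supp: "k \<ge> 0 \<or> n - k < 0 \<Longrightarrow> T3 w n k = 0"
  unfolding T3_def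
  by (auto intro: GG_empty[where ca="-1" and cb=0] GG_empty[where ca=0 and cb=1])



lemma T1_col: "T1 w n 0 = (if n \<ge> 0 then 1 else 0)"
proof (cases "n \<ge> -1")
  case True then show ?thesis
  proof (induction n rule: int_ge_induct)
    case base show ?case by (simp add: T1_supp)
  next
    case (step i) then show ?case
      using T1_dec[where w=w and n=i and k=0] T1_supp[where w=w and n=i and k="-1"] by auto
  qed
next
  case False then show ?thesis by (simp add: T1_supp)
qed

lemma T2_col: "T2 w n 0 = (if n \<le> -1 then 1 else 0)"
proof (cases "n \<le> 0")
  case True then show ?thesis
  proof (induction n rule: int_le_induct)
    case base show ?case by (simp add: T2_supp)
  next
    case (step i) then show ?case
      using T2_dec[where w=w and n="i-1" and k=0] T2_supp[where w=w and n="i-1" and k="-1"] by (cases "i = 0") auto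
  qed
next
  case False then show ?thesis by (simp add: T2_supp)
qed

lemma T1_diag: "T1 w n n = (if n \<ge> 0 then 1 else 0)"
proof (cases "n \<ge> -1")
  case True then show ?thesis
  proof (induction n rule: int_ge_induct)
    case base show ?case by (simp add: T1_supp)
  next
    case (step i) then show ?case
      using T1_dec[where w=w and n=i and k="i+1"] T1_supp[where w=w and n=i and k="i+1"] by auto
  qed
next
  case False then show ?thesis by (simp add: T1_supp)
qed

lemma T3_diag:
  fixes w :: "int \<Rightarrow> int \<Rightarrow> 'a::field"
  assumes nz: "\<forall>s t. w s t \<noteq> 0"
  shows "T3 w n n = (if n \<le> -1 then 1 else 0)"
proof (cases "n \<le> 0")
  case True then show ?thesis
  proof (induction n rule: int_le_induct)
    case base show ?case by (simp add: T3_supp)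
  next
    case (step i) then show ?case
      using T3_dec[OF nz, where n="i-1" and k=i] T3_supp[where w=w and n="i-1" and k=i] by (cases "i = 0") auto
  qed
next
  case False then show ?thesis by (simp add: T3_supp)
qed

definition PP :: "(int \<Rightarrow> int \<Rightarrow> 'a::field) \<Rightarrow> int \<Rightarrow> int \<Rightarrow> 'a" where
  "PP w n k = T1 w n k + T2 w n k + T3 w n k"

lemma PP_wbinom:
  fixes w :: "int \<Rightarrow> int \<Rightarrow> 'a::field"
  assumes nz: "\<forall>s t. w s t \<noteq> 0"
  shows "is_wbinom w (PP w)"
  unfolding is_wbinom_def
proof (intro conjI allI impI)
  fix n :: int
  show "PP w n 0 = 1" by (simp add: PP_def T1_col T2_col T3_supp)
  show "PP w n n = 1" by (simp add: PP_def T1_diag T3_diag[OF nz] T2_supp)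
next
  fix n k :: int
  assume "(n + 1, k) \<noteq> (0, 0)"
  then show "PP w (n + 1) k = PP w n k + PP w n (k - 1) * WW w k (n + 1 - k)"
    unfolding PP_def T1_dec[where n=n] T2_dec[where n=n] T3_dec[OF nz, where n=n]
    by (simp add: algebra_simps)
qed



lemma uniq0:
  fixes D :: "int \<Rightarrow> int \<Rightarrow> 'a::field"
  assumes c0: "\<And>n. D n 0 = 0" and cd: "\<And>n. D n n = 0"
   and rec: "\<And>n k. (n+1,k) \<noteq> (0,0) \<Longrightarrow> D (n+1) k = D n k + D n (k-1) * WW w k (n+1-k)"
   and nz: "\<And>s t. WW w s t \<noteq> 0"
  shows "D n k = 0"
proof -
  have S1: "\<forall>k. 0 \<le> k \<and> k \<le> n \<longrightarrow> D n k = 0" if "0 \<le> n" for n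
    using that
  proof (induction n rule: int_ge_induct)
    case base then show ?case using c0 by auto
  next
    case (step i)
    show ?case
    proof (intro allI impI)
      fix k assume k: "0 \<le> k \<and> k \<le> i + 1"
      show "D (i+1) k = 0"
      proof (cases "k = 0 \<or> k = i+1")
        case True then show ?thesis using c0 cd by auto
      next
        case False
        then have "D (i+1) k = D i k + D i (k-1) * WW w k (i+1-k)" using rec step by auto
        with step False k show ?thesis by auto
      qed
    qed
  qed
  have S2: "\<forall>n. 0 \<le> n \<longrightarrow> D n (n + j) = 0" if "1 \<le> j" for j
    using that
  proof (induction j rule: int_ge_induct)
    case base show ?case
    proof (intro allI impI)
      fix n :: int assume "0 \<le> n"
      then have "D (n+1) (n+1) = D n (n+1) + D n n * WW w (n+1) 0" using rec[of n "n+1"] by simp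
      then show "D n (n + 1) = 0" using cd[of n] cd[of "n+1"] by simp
    qed
  next
    case (step j)
    show ?case
    proof (intro allI impI)
      fix n :: int assume n: "0 \<le> n"
      have "D (n+1) (n+j+1) = D n (n+j+1) + D n (n+j) * WW w (n+j+1) (n+1-(n+j+1))"
        using rec[of n "n+j+1"] n by simp
      moreover have "D (n+1) (n+j+1) = 0" using step(2)[rule_format, of "n+1"] n by (simp add: add_ac)
      moreover have "D n (n+j) = 0" using step n by auto
      ultimately show "D n (n + (j + 1)) = 0" by (simp add: add.assoc)
    qed
  qed
  have S3: "\<forall>n. 0 \<le> n \<longrightarrow> D n (- j) = 0" if "1 \<le> j" for j
    using that
  proof (induction j rule: int_ge_induct)
    case base show ?case
    proof (intro allI impI)
      fix n :: int assume n: "0 \<le> n"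
      have "D (n+1) 0 = D n 0 + D n (0-1) * WW w 0 (n+1-0)" using rec[of n 0] n by simp
      then have "D n (-1) * WW w 0 (n+1) = 0" using c0 by simp
      then show "D n (- 1) = 0" using nz by simp
    qed
  next
    case (step j)
    show ?case
    proof (intro allI impI)
      fix n :: int assume n: "0 \<le> n"
      have "D (n+1) (-j) = D n (-j) + D n (-j-1) * WW w (-j) (n+1-(-j))" using rec[of n "-j"] n by simp
      moreover have "D (n+1) (-j) = 0" "D n (-j) = 0" using step n by auto
      ultimately have "D n (-j-1) * WW w (-j) (n+1-(-j)) = 0" by simp
      then show "D n (- (j + 1)) = 0" using nz by simp
    qed
  qed
  have R: "D n k = 0" if "0 \<le> n" for n k
  proof -
    consider "k < 0" | "0 \<le> k \<and> k \<le> n" | "n < k" by linarith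
    then show ?thesis
    proof cases
      case 1 then show ?thesis using S3[of "-k"] that by simp
    next
      case 2 then show ?thesis using S1 that by blast
    next
      case 3
      then have "D n (n + (k - n)) = 0" using S2[of "k - n"] that by auto
      then show ?thesis by simp
    qed
  qed
  have N: "\<forall>k. D (-m) k = 0" if "0 \<le> m" for m
    using that
  proof (induction m rule: int_ge_induct)
    case base show ?case using R by simp
  next
    case (step m)
    let ?n = "- (m + 1)"
    have up: "D ?n k = 0" if "0 \<le> k" for k
      using that
    proof (induction k rule: int_ge_induct)
      case base show ?case using c0 by simp
    next
      case (step k)
      have "D (?n+1) (k+1) = D ?n (k+1) + D ?n k * WW w (k+1) (?n+1-(k+1))"
        using rec[of ?n "k+1"] step by simp
      moreover have "D (?n+1) (k+1) = 0" using \<open>\<forall>k. D (-m) k = 0\<close> by simp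
      ultimately show ?case using step by simp
    qed
    have down: "D ?n k = 0" if "k \<le> 0" for k
      using that
    proof (induction k rule: int_le_induct)
      case base show ?case using c0 by simp
    next
      case (step k)
      show ?case
      proof (cases "m = 0 \<and> k = 0")
        case True then show ?thesis using cd[of "-1"] by simp
      next
        case False
        then have "D (?n+1) k = D ?n k + D ?n (k-1) * WW w k (?n+1-k)"
          using rec[of ?n k] by auto
        moreover have "D (?n+1) k = 0" using \<open>\<forall>k. D (-m) k = 0\<close> by simp
        ultimately have "D ?n (k-1) * WW w k (?n+1-k) = 0" using step by simp
        then show ?thesis using nz by simp
      qed
    qed
    show ?case
    proof
      fix k show "D (- (m + 1)) k = 0" using up down by (cases "0 \<le> k") auto
    qed
  qed
  show ?thesis
  proof (cases "0 \<le> n")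
    case True then show ?thesis using R by simp
  next
    case False then show ?thesis using N[of "-n"] by simp
  qed
qed



lemma wbinom_eq:
  fixes w :: "int \<Rightarrow> int \<Rightarrow> 'a::field"
  assumes nz: "\<forall>s t. w s t \<noteq> 0"
  shows "wbinom w = PP w"
  unfolding wbinom_def
proof (rule the_equality)
  show "is_wbinom w (PP w)" by (rule PP_wbinom[OF nz])
next
  fix B assume B: "is_wbinom w B"
  have P: "is_wbinom w (PP w)" by (rule PP_wbinom[OF nz])
  have "B n k - PP w n k = 0" for n k
  proof (rule uniq0[where D="\<lambda>n k. B n k - PP w n k" and w=w])
    show "\<And>n. B n 0 - PP w n 0 = 0" using B P by (simp add: is_wbinom_def)
    show "\<And>n. B n n - PP w n n = 0" using B P by (simp add: is_wbinom_def)
    show "\<And>s t. WW w s t \<noteq> 0" using WW_nz[OF nz] .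
    fix n k :: int assume "(n + 1, k) \<noteq> (0, 0)"
    then show "B (n + 1) k - PP w (n + 1) k = B n k - PP w n k + (B n (k - 1) - PP w n (k - 1)) * WW w k (n + 1 - k)"
    proof -
      have b: "B (n + 1) k = B n k + B n (k - 1) * WW w k (n + 1 - k)"
        using B \<open>(n + 1, k) \<noteq> (0, 0)\<close> unfolding is_wbinom_def by blast
      have p: "PP w (n + 1) k = PP w n k + PP w n (k - 1) * WW w k (n + 1 - k)"
        using P \<open>(n + 1, k) \<noteq> (0, 0)\<close> unfolding is_wbinom_def by blast
      show ?thesis unfolding b p by (simp add: algebra_simps)
    qed
  qed
  then show "B = PP w" by (intro ext) simp
qed

lemma hybrid_sum:
  fixes w :: "int \<Rightarrow> int \<Rightarrow> 'a::field"
  shows "(\<Sum>P\<in>hybrid_paths k (n - k). path_weight w P) = PP w n k"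
proof -
  have inj: "inj_on ((#) m) X" for m :: move and X by (auto simp: inj_on_def)
  consider "k \<ge> 0 \<and> n - k \<ge> 0" | "k \<ge> 0 \<and> n - k < 0" | "k < 0 \<and> n - k \<ge> 0" | "k < 0 \<and> n - k < 0"
    by linarith
  then show ?thesis
  proof cases
    case 1
    then have "hybrid_paths k (n - k) = Paths {Nst, Est} (0,0) (k, n - k)"
      by (simp add: hybrid_paths_def Paths_def)
    then have "(\<Sum>P\<in>hybrid_paths k (n - k). path_weight w P) = T1 w n k"
      by (simp add: T1_def GG_def path_weight_def)
    then show ?thesis using 1 by (simp add: PP_def T2_supp T3_supp)
  next
    case 2
    have "hybrid_paths k (n - k) = (#) Sst ` Paths {Sst, ESst} (0,-1) (k, n - k)"
    proof (rule set_eqI)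
      fix ms show "ms \<in> hybrid_paths k (n - k) \<longleftrightarrow> ms \<in> (#) Sst ` Paths {Sst, ESst} (0,-1) (k, n - k)"
        using 2 by (cases ms) (auto simp: hybrid_paths_def Paths_def apply_move_def)
    qed
    then have "(\<Sum>P\<in>hybrid_paths k (n - k). path_weight w P) = T2 w n k"
      by (simp add: T2_def GG_def path_weight_def sum.reindex[OF inj] apply_move_def)
    then show ?thesis using 2 by (simp add: PP_def T1_supp T3_supp)
  next
    case 3
    have "hybrid_paths k (n - k) = (#) Wst ` Paths {Wst, NWst} (-1,0) (k, n - k)"
    proof (rule set_eqI)
      fix ms show "ms \<in> hybrid_paths k (n - k) \<longleftrightarrow> ms \<in> (#) Wst ` Paths {Wst, NWst} (-1,0) (k, n - k)"
        using 3 by (cases ms) (auto simp: hybrid_paths_def Paths_def apply_move_def)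
    qed
    then have "(\<Sum>P\<in>hybrid_paths k (n - k). path_weight w P) = T3 w n k"
      by (simp add: T3_def GG_def path_weight_def sum.reindex[OF inj] apply_move_def WW_def)
    then show ?thesis using 3 by (simp add: PP_def T1_supp T2_supp)
  next
    case 4
    then have "hybrid_paths k (n - k) = {}" by (simp add: hybrid_paths_def)
    then show ?thesis using 4 by (simp add: PP_def T1_supp T2_supp T3_supp)
  qed
qed

theorem theorem4:
  fixes w :: "int \<Rightarrow> int \<Rightarrow> 'a::field" and n k :: int
  assumes "\<forall>s t. w s t \<noteq> 0"
  shows "(\<Sum>P\<in>hybrid_paths k (n - k). path_weight w P) = wbinom w n k"
  using hybrid_sum wbinom_eq[OF assms] by simp

end
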